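(* Let $\mathcal{G}=(\mathcal{V},\mathcal{R},\mathcal{E})$ be a knowledge graph, let $s\in\mathcal{V}$ be a source node, $q\in\mathcal{R}$ a query relation, and $\delta\ge 0$ an integer offset. Let $\mathbf{x}_q^{(t)}(s,o)$, $t\ge 0$, $o\in\mathcal{V}$, be computed by the truncated generalized Bellman–Ford recursion described in the context, and let $\mathbf{x}_q^F(s,o)=\mathbf{x}_q^{(\mathrm{dist}(s,o)+\delta)}(s,o)$ be the final representation. Then for every $o\in\mathcal{V}$ (with $\mathrm{dist}(s,o)<\infty$), the final representation $\mathbf{x}_q^F(s,o)$ aggregates exactly the path representations of all paths from $s$ to $o$ whose length lies between $\mathrm{dist}(s,o)$ and $\mathrm{dist}(s,o)+\delta$, and no others; that is, $$\mathbf{x}_q^F(s,o)=\bigoplus_{t=\mathrm{dist}(s,o)}^{\mathrm{dist}(s,o)+\delta}\ \bigoplus_{p\in P_{s,o}^t}\ \bigotimes_{i=1}^{|p|} w(e_i).$$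
   Context: A knowledge graph is $\mathcal{G}=(\mathcal{V},\mathcal{R},\mathcal{E})$ with entity set $\mathcal{V}$, relation set $\mathcal{R}$, and edge set $\mathcal{E}$ of triples $(u,r,v)$ with $u,v\in\mathcal{V}$, $r\in\mathcal{R}$, regarded as a directed edge from $u$ to $v$. For $o\in\mathcal{V}$, $\mathcal{E}(o)$ denotes the set of edges of the form $(v,r,o)$ (edges with $o$ as object). All edges have weight 1, and $\mathrm{dist}(s,o)$ is the shortest path distance (number of edges) from $s$ to $o$. For an integer $t\ge 0$, $P^t_{s,o}$ denotes the set of paths (in the loose sense of walks, repeated nodes and edges allowed) of length $t$ from $s$ to $o$; for a path $p=(e_1,\dots,e_{|p|})$, $w(e_i)=\mathbf{w}_q(e_i)$ is the representation of edge $e_i$ conditioned on $q$. The operations $\oplus$ (summation/aggregation) and $\otimes$ (multiplication) are those of the semiring used in the generalized Bellman–Ford algorithm, and $\mathbf{1}_q(s=o)$ denotes the multiplicative identity of the semiring if $s=o$ and the additive identity otherwise. Truncated Bellman–Ford recursion: set $\mathbf{x}_q^{(0)}(s,o)=\mathbf{1}_q(s=o)$. For $t\ge 1$ define the constrained edge set $$\mathcal{C}(s,o,t)=\begin{cases}\emptyset, & \text{if } t<\mathrm{dist}(s,o)\text{ or } t>\mathrm{dist}(s,o)+\delta,\\ \{(v,r,o)\in\mathcal{E}(o)\,:\,\mathrm{dist}(s,v)<\mathrm{dist}(s,o)+\delta\}, & \text{otherwise.}\end{cases}$$ For $t\ge 1$: if $\mathrm{dist}(s,o)\le t\le \mathrm{dist}(s,o)+\delta$,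 then $$\mathbf{x}_q^{(t)}(s,o)=\Big(\bigoplus_{(v,r,o)\in\mathcal{C}(s,o,t)}\mathbf{x}_q^{(t-1)}(s,v)\otimes \mathbf{w}_q(v,r,o)\Big)\oplus \mathbf{x}_q^{(0)}(s,o);$$ otherwise node $o$ is not updated at iteration $t$, i.e. $\mathbf{x}_q^{(t)}(s,o)=\mathbf{x}_q^{(t-1)}(s,o)$. The final representation of the pair is $\mathbf{x}_q^F(s,o)=\mathbf{x}_q^{(\mathrm{dist}(s,o)+\delta)}(s,o)$. *)

theory Defs
  imports Main "HOL-Library.Extended_Nat"
begin

type_synonym ('v, 'r) edge = "'v \<times> 'r \<times> 'v"

abbreviation subj :: "('v, 'r) edge \<Rightarrow> 'v" where "subj e \<equiv> fst e"
abbreviation obj :: "('v, 'r) edge \<Rightarrow> 'v" where "obj e \<equiv> snd (snd e)"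

text \<open>A walk (path in the loose sense) from s to ob: a list of edges of E,
  consecutive, starting at s and ending at ob.\<close>
fun is_walk :: "('v, 'r) edge set \<Rightarrow> 'v \<Rightarrow> 'v \<Rightarrow> ('v, 'r) edge list \<Rightarrow> bool" where
  "is_walk E s ob [] = (s = ob)"
| "is_walk E s ob (e # es) = (e \<in> E \<and> subj e = s \<and> is_walk E (obj e) ob es)"

definition paths :: "('v, 'r) edge set \<Rightarrow> 'v \<Rightarrow> 'v \<Rightarrow> nat \<Rightarrow> ('v, 'r) edge list set" where
  "paths E s ob t = {p. is_walk E s ob p \<and> length p = t}"

definition gdist :: "('v, 'r) edge set \<Rightarrow> 'v \<Rightarrow> 'v \<Rightarrow> enat" where
  "gdist E s ob = (if \<exists>p. is_walk E s ob p
                  then enat (LEAST n. \<exists>p. is_walk E s ob p \<and> length p = n)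
                  else \<infinity>)"

definition Cset :: "('v, 'r) edge set \<Rightarrow> nat \<Rightarrow> 'v \<Rightarrow> 'v \<Rightarrow> nat \<Rightarrow> ('v, 'r) edge set" where
  "Cset E \<delta> s ob t =
     (if enat t < gdist E s ob \<or> enat t > gdist E s ob + enat \<delta> then {}
      else {e \<in> E. obj e = ob \<and> gdist E s (subj e) < gdist E s ob + enat \<delta>})"

text \<open>Truncated generalized Bellman--Ford recursion over a semiring
  (\<oplus> = +, \<otimes> = *, multiplicative identity 1, additive identity 0).
  trunc_bf E w s \<delta> t ob = x_q^{(t)}(s,ob), where w = w_q.\<close>
primrec trunc_bf :: "('v, 'r) edge set \<Rightarrow> (('v, 'r) edge \<Rightarrow> 'a::semiring_1) \<Rightarrow> 'v \<Rightarrow> nat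
                      \<Rightarrow> nat \<Rightarrow> 'v \<Rightarrow> 'a" where
  "trunc_bf E w s \<delta> 0 ob = (if s = ob then 1 else 0)"
| "trunc_bf E w s \<delta> (Suc t) ob =
     (if gdist E s ob \<le> enat (Suc t) \<and> enat (Suc t) \<le> gdist E s ob + enat \<delta>
      then (\<Sum>e \<in> Cset E \<delta> s ob (Suc t). trunc_bf E w s \<delta> t (subj e) * w e)
           + (if s = ob then 1 else 0)
      else trunc_bf E w s \<delta> t ob)"

definition final_rep :: "('v, 'r) edge set \<Rightarrow> (('v, 'r) edge \<Rightarrow> 'a::semiring_1) \<Rightarrow> 'v \<Rightarrow> nat
                      \<Rightarrow> 'v \<Rightarrow> 'a" where
  "final_rep E w s \<delta> ob = trunc_bf E w s \<delta> (the_enat (gdist E s ob) + \<delta>) ob"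

end

theory Submission
  imports Defs
begin

definition Wt :: "('v, 'r) edge set \<Rightarrow> (('v, 'r) edge \<Rightarrow> 'a::semiring_1) \<Rightarrow> 'v \<Rightarrow> 'v \<Rightarrow> nat \<Rightarrow> 'a" where
  "Wt E w s ob k = (\<Sum>p \<in> paths E s ob k. prod_list (map w p))"

lemma is_walk_snoc:
  "is_walk E s ob (es @ [e]) \<longleftrightarrow> is_walk E s (subj e) es \<and> e \<in> E \<and> obj e = ob"
  by (induction es arbitrary: s) auto

lemma is_walk_set: "is_walk E s ob p \<Longrightarrow> set p \<subseteq> E"
  by (induction p arbitrary: s) auto

lemma finite_paths: "finite E \<Longrightarrow> finite (paths E s ob k)"
proof -
  assume "finite E"
  have "paths E s ob k \<subseteq> {xs. set xs \<subseteq> E \<and> length xs = k}"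
    unfolding paths_def by (auto dest: is_walk_set)
  moreover have "finite {xs. set xs \<subseteq> E \<and> length xs = k}"
    using finite_lists_length_eq[OF \<open>finite E\<close>] by simp
  ultimately show ?thesis by (rule finite_subset)
qed

lemma gdist_le: "is_walk E s ob p \<Longrightarrow> gdist E s ob \<le> enat (length p)"
  unfolding gdist_def by (auto intro: Least_le)

lemma paths_empty: assumes "enat k < gdist E s ob" shows "paths E s ob k = {}"
proof -
  have "\<not> is_walk E s ob p" if "length p = k" for p
    using gdist_le[of E s ob p] assms that by auto
  then show ?thesis unfolding paths_def by auto
qed

lemma Wt_zero: assumes "enat k < gdist E s ob" shows "Wt E w s ob k = 0"
  unfolding Wt_def paths_empty[OF assms] by simp

lemma gdist_edge:
  assumes "e \<in> E"
  shows "gdist E s (obj e) \<le> gdist E s (subj e) + 1"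
proof (cases "\<exists>p. is_walk E s (subj e) p")
  case False
  then have "gdist E s (subj e) = \<infinity>" unfolding gdist_def by simp
  then show ?thesis by simp
next
  case True
  let ?n = "LEAST n. \<exists>p. is_walk E s (subj e) p \<and> length p = n"
  from True obtain p0 where p0: "is_walk E s (subj e) p0" by blast
  have "\<exists>p. is_walk E s (subj e) p \<and> length p = ?n"
    by (rule LeastI[of "\<lambda>n. \<exists>p. is_walk E s (subj e) p \<and> length p = n" "length p0"]) (use p0 in blast)
  then obtain p where p: "is_walk E s (subj e) p" "length p = ?n" by blast
  have "is_walk E s (obj e) (p @ [e])" by (simp add: is_walk_snoc p assms)
  then have "gdist E s (obj e) \<le> enat (length (p @ [e]))" by (rule gdist_le)
  then have "gdist E s (obj e) \<le> enat (?n + 1)" using p by simp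
  moreover have "gdist E s (subj e) = enat ?n" using True unfolding gdist_def by simp
  ultimately show ?thesis by (simp add: one_enat_def)
qed

lemma Wt_0: "Wt E w s ob 0 = (if s = ob then 1 else 0)"
proof -
  have "paths E s ob 0 = (if s = ob then {[]} else {})"
    unfolding paths_def by (cases "s = ob") auto
  then show ?thesis unfolding Wt_def by simp
qed

lemma Wt_Suc:
  assumes "finite E"
  shows "Wt E w s ob (Suc k) = (\<Sum>e\<in>{e\<in>E. obj e = ob}. Wt E w s (subj e) k * w e)"
proof -
  let ?I = "{e\<in>E. obj e = ob}"
  let ?S = "SIGMA e:?I. paths E s (subj e) k"
  define f where "f = (\<lambda>x::('a,'b) edge \<times> ('a,'b) edge list. snd x @ [fst x])"
  have img: "paths E s ob (Suc k) = f ` ?S"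
  proof
    show "paths E s ob (Suc k) \<subseteq> f ` ?S"
    proof
      fix p assume "p \<in> paths E s ob (Suc k)"
      then have w: "is_walk E s ob p" "length p = Suc k" unfolding paths_def by auto
      obtain es e where pe: "p = es @ [e]"
        using w(2) by (cases p rule: rev_exhaust) auto
      have "is_walk E s (subj e) es \<and> e \<in> E \<and> obj e = ob"
        using w(1) by (simp add: pe is_walk_snoc)
      then have "(e, es) \<in> ?S" using w pe unfolding paths_def by auto
      moreover have "p = f (e, es)" using pe unfolding f_def by simp
      ultimately show "p \<in> f ` ?S" by (rule rev_image_eqI)
    qed
    show "f ` ?S \<subseteq> paths E s ob (Suc k)"
    proof
      fix p assume "p \<in> f ` ?S"
      then obtain e es where x: "(e, es) \<in> ?S" "p = es @ [e]" unfolding f_def by auto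
      then have "is_walk E s (subj e) es" "e \<in> E" "obj e = ob" "length es = k"
        unfolding paths_def by auto
      then show "p \<in> paths E s ob (Suc k)" unfolding paths_def x(2)
        by (simp add: is_walk_snoc)
    qed
  qed
  have inj: "inj_on f ?S" unfolding f_def by (auto simp: inj_on_def)
  have fin: "finite ?I" using assms by simp
  have "Wt E w s ob (Suc k) = (\<Sum>x\<in>?S. prod_list (map w (f x)))"
    unfolding Wt_def img sum.reindex[OF inj] by (simp add: comp_def)
  also have "\<dots> = (\<Sum>x\<in>?S. prod_list (map w (snd x)) * w (fst x))"
    unfolding f_def by simp
  also have "\<dots> = (\<Sum>e\<in>?I. \<Sum>es\<in>paths E s (subj e) k. prod_list (map w es) * w e)"
    using sum.Sigma[OF fin, of "\<lambda>e. paths E s (subj e) k" "\<lambda>e es. prod_list (map w es) * w e"]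
      finite_paths[OF assms] by (simp add: split_def)
  also have "\<dots> = (\<Sum>e\<in>?I. Wt E w s (subj e) k * w e)"
    unfolding Wt_def by (simp add: sum_distrib_right)
  finally show ?thesis .
qed

lemma invariant:
  assumes "finite E"
  shows "trunc_bf E w s \<delta> t ob =
    (\<Sum>k\<le>t. if enat k \<le> gdist E s ob + enat \<delta> then Wt E w s ob k else 0)"
proof (induction t arbitrary: ob)
  case 0
  have "enat 0 \<le> gdist E s ob + enat \<delta>" by (simp add: zero_enat_def[symmetric])
  then show ?case by (simp add: Wt_0)
next
  case (Suc t)
  let ?d = "\<lambda>v. gdist E s v"
  let ?I = "{e\<in>E. obj e = ob}"
  show ?case
  proof (cases "?d ob \<le> enat (Suc t) \<and> enat (Suc t) \<le> ?d ob + enat \<delta>")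
    case True
    have C: "Cset E \<delta> s ob (Suc t) = {e \<in> ?I. ?d (subj e) < ?d ob + enat \<delta>}"
      using True unfolding Cset_def by auto
    have rhs: "(\<Sum>k\<le>Suc t. if enat k \<le> ?d ob + enat \<delta> then Wt E w s ob k else 0)
        = (\<Sum>k\<le>Suc t. Wt E w s ob k)"
    proof (rule sum.cong)
      fix k assume "k \<in> {..Suc t}"
      then have "enat k \<le> enat (Suc t)" by simp
      then have "enat k \<le> ?d ob + enat \<delta>" using order.trans[OF _ conjunct2[OF True]] by blast
      then show "(if enat k \<le> ?d ob + enat \<delta> then Wt E w s ob k else 0) = Wt E w s ob k" by simp
    qed simp
    also have "\<dots> = Wt E w s ob 0 + (\<Sum>k\<le>t. Wt E w s ob (Suc k))"
      by (rule sum.atMost_Suc_shift)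
    also have "(\<Sum>k\<le>t. Wt E w s ob (Suc k)) = (\<Sum>e\<in>?I. (\<Sum>k\<le>t. Wt E w s (subj e) k) * w e)"
      by (simp add: Wt_Suc[OF assms] sum_distrib_right sum.swap[of _ "{..t}"])
    also have "\<dots> = (\<Sum>e\<in>Cset E \<delta> s ob (Suc t). trunc_bf E w s \<delta> t (subj e) * w e)"
    proof (rule sum.mono_neutral_cong_right)
      show "finite ?I" using assms by simp
      show "Cset E \<delta> s ob (Suc t) \<subseteq> ?I" unfolding C by auto
      show "\<forall>e\<in>?I - Cset E \<delta> s ob (Suc t). (\<Sum>k\<le>t. Wt E w s (subj e) k) * w e = 0"
      proof
        fix e assume e: "e \<in> ?I - Cset E \<delta> s ob (Suc t)"
        then have "?d ob + enat \<delta> \<le> ?d (subj e)" unfolding C by auto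
        then have "enat (Suc t) \<le> ?d (subj e)" using order.trans[OF conjunct2[OF True]] by blast
        then have "\<And>k. k \<le> t \<Longrightarrow> enat k < ?d (subj e)"
        proof -
          fix k assume "k \<le> t" then have "enat k < enat (Suc t)" by simp
          then show "enat k < ?d (subj e)" by (rule order.strict_trans2) fact
        qed
        then show "(\<Sum>k\<le>t. Wt E w s (subj e) k) * w e = 0" by (simp add: Wt_zero)
      qed
      show "(\<Sum>k\<le>t. Wt E w s (subj e) k) * w e = trunc_bf E w s \<delta> t (subj e) * w e"
        if e: "e \<in> Cset E \<delta> s ob (Suc t)" for e
      proof -
        have eE: "e \<in> E" "obj e = ob" using e unfolding C by auto
        have "?d ob \<le> ?d (subj e) + 1" using gdist_edge[OF eE(1)] eE(2) by simp
        then have "?d ob + enat \<delta> \<le> ?d (subj e) + 1 + enat \<delta>" by (rule add_right_mono)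
        then have "enat (Suc t) \<le> ?d (subj e) + 1 + enat \<delta>"
          using order.trans[OF conjunct2[OF True]] by blast
        then have "enat t \<le> ?d (subj e) + enat \<delta>"
          by (cases "?d (subj e)") (auto simp: one_enat_def)
        then have "\<And>k. k \<le> t \<Longrightarrow> enat k \<le> ?d (subj e) + enat \<delta>"
        proof -
          fix k assume "k \<le> t" then have "enat k \<le> enat t" by simp
          then show "enat k \<le> ?d (subj e) + enat \<delta>" by (rule order.trans) fact
        qed
        then show ?thesis using Suc.IH by simp
      qed
    qed
    finally show ?thesis using True
      by (simp add: Wt_0 add.commute)
  next
    case False
    have "(\<Sum>k\<le>Suc t. if enat k \<le> ?d ob + enat \<delta> then Wt E w s ob k else 0)
        = (\<Sum>k\<le>t. if enat k \<le> ?d ob + enat \<delta> then Wt E w s ob k else 0)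
          + (if enat (Suc t) \<le> ?d ob + enat \<delta> then Wt E w s ob (Suc t) else 0)"
      by simp
    also have "(if enat (Suc t) \<le> ?d ob + enat \<delta> then Wt E w s ob (Suc t) else 0) = 0"
      using False by (auto intro: Wt_zero)
    finally have eq: "(\<Sum>k\<le>Suc t. if enat k \<le> ?d ob + enat \<delta> then Wt E w s ob k else 0)
        = (\<Sum>k\<le>t. if enat k \<le> ?d ob + enat \<delta> then Wt E w s ob k else 0)" by simp
    have "trunc_bf E w s \<delta> (Suc t) ob = trunc_bf E w s \<delta> t ob"
      using False by (simp only: trunc_bf.simps if_False)
    then show ?thesis using eq Suc.IH[of ob] by simp
  qed
qed

theorem theorem1:
  fixes V :: "'v set" and R :: "'r set" and E :: "('v, 'r) edge set"
    and w :: "'r \<Rightarrow> ('v, 'r) edge \<Rightarrow> 'a::semiring_1"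
    and s :: 'v and q :: 'r and \<delta> :: nat and ob :: 'v
  assumes "finite V" and "finite R" and "E \<subseteq> V \<times> R \<times> V"
    and "s \<in> V" and "q \<in> R" and "ob \<in> V"
    and "gdist E s ob \<noteq> \<infinity>"
  shows "final_rep E (w q) s \<delta> ob =
    (\<Sum>t \<in> {the_enat (gdist E s ob) .. the_enat (gdist E s ob) + \<delta>}.
       \<Sum>p \<in> paths E s ob t. prod_list (map (w q) p))"
proof -
  have fE: "finite E" using assms(1,2,3) by (meson finite_SigmaI finite_subset)
  obtain D where D: "gdist E s ob = enat D" using assms(7) by auto
  have "final_rep E (w q) s \<delta> ob = (\<Sum>k\<le>D + \<delta>. Wt E (w q) s ob k)"
    unfolding final_rep_def D using invariant[OF fE, of "w q" s \<delta> "D + \<delta>" ob] D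
    by simp
  also have "\<dots> = (\<Sum>k\<in>{D..D+\<delta>}. Wt E (w q) s ob k)"
  proof (rule sum.mono_neutral_right)
    show "\<forall>k\<in>{..D + \<delta>} - {D..D + \<delta>}. Wt E (w q) s ob k = 0"
      using D by (auto intro: Wt_zero)
  qed auto
  finally show ?thesis unfolding Wt_def D by simp
qed

end
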